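(* For $\alpha\ge\beta\ge-1/2$ and integers $n\ge(\alpha+|\beta|)^2$, $$p_n^{(\alpha,\beta)}(1)\sim\frac{n^{\alpha+1/2}}{2^{(\alpha+\beta)/2}\Gamma(\alpha+1)},\qquad K_n^{(\alpha,\beta)}(1)\sim\frac{n^{2\alpha+2}}{2^{\alpha+\beta}\Gamma(\alpha+1)\Gamma(\alpha+2)},$$ where the constants involved in $\sim$ are absolute constants, independent of $n$, $\alpha$, $\beta$.
   Context: For $\alpha,\beta>-1$, $p_\ell^{(\alpha,\beta)}$ is the Jacobi polynomial of degree $\ell$ with positive leading coefficient, normalized so that $\int_{-1}^1p_\ell^{(\alpha,\beta)}(x)p_j^{(\alpha,\beta)}(x)(1-x)^\alpha(1+x)^\beta dx=\delta_{\ell,j}$; $K_n^{(\alpha,\beta)}(x)=\sum_{\ell=0}^{n-1}p_\ell^{(\alpha,\beta)}(1)p_\ell^{(\alpha,\beta)}(x)$. $A\sim B$ means $c_1B\le A\le c_2B$ for absolute positive constants $c_1,c_2$. *)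

theory Defs
  imports "HOL-Analysis.Analysis"
begin

text \<open>Classical (unnormalized) Jacobi polynomial P_n^(a,b)(x), Szego (4.3.2):
  sum over k of C(n+a, n-k) C(n+b, k) ((x-1)/2)^k ((x+1)/2)^(n-k).
  It has positive leading coefficient for a, b > -1.\<close>
definition jacobiP :: "real \<Rightarrow> real \<Rightarrow> nat \<Rightarrow> real \<Rightarrow> real" where
  "jacobiP a b n x =
     (\<Sum>k=0..n. ((real n + a) gchoose (n - k)) * ((real n + b) gchoose k)
                 * ((x - 1) / 2) ^ k * ((x + 1) / 2) ^ (n - k))"

definition jacobi_weight :: "real \<Rightarrow> real \<Rightarrow> real \<Rightarrow> real" where
  "jacobi_weight a b x = (1 - x) powr a * (1 + x) powr b"

definition jacobi_p :: "real \<Rightarrow> real \<Rightarrow> nat \<Rightarrow> real \<Rightarrow> real" where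
  "jacobi_p a b n x =
     jacobiP a b n x / sqrt (LBINT t=-1..1. (jacobiP a b n t)\<^sup>2 * jacobi_weight a b t)"

definition jacobi_K :: "real \<Rightarrow> real \<Rightarrow> nat \<Rightarrow> real \<Rightarrow> real" where
  "jacobi_K a b n x = (\<Sum>l<n. jacobi_p a b l 1 * jacobi_p a b l x)"

end

theory Submission
  imports Defs "HOL-Computational_Algebra.Formal_Power_Series" "HOL-Computational_Algebra.Polynomial"
begin

lemma alt_pow:
  fixes n m :: nat assumes "m \<le> n"
  shows "(\<Sum>i\<le>n. (-1)^i * real (n choose i) * real i ^ m) = (if m = n then (-1)^n * fact n else 0)"
  using assms
proof (induction n arbitrary: m)
  case 0
  then show ?case by simp
next
  case (Suc n)
  show ?case
  proof (cases m)
    case 0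
    then show ?thesis using choose_alternating_sum[of "Suc n", where 'a=real] by simp
  next
    case (Suc r)
    with Suc.prems have r: "r \<le> n" by simp
    have "(\<Sum>i\<le>Suc n. (-1)^i * real (Suc n choose i) * real i ^ m)
        = (\<Sum>i\<le>n. (-1)^(Suc i) * real (Suc n choose Suc i) * real (Suc i) ^ m)"
      by (subst sum.atMost_Suc_shift) (simp add: Suc)
    also have "\<dots> = (\<Sum>i\<le>n. - real (Suc n) * ((-1)^i * real (n choose i) * real (Suc i) ^ r))"
    proof (rule sum.cong[OF refl])
      fix i assume "i \<in> {..n}"
      have e: "real (Suc n choose Suc i) * real (Suc i) = real (Suc n) * real (n choose i)"
        using Suc_times_binomial_eq[of n i] by (metis of_nat_mult)
      have "(-1)^(Suc i) * real (Suc n choose Suc i) * real (Suc i) ^ m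
          = - ((-1)^i * (real (Suc n choose Suc i) * real (Suc i)) * real (Suc i) ^ r)"
        by (simp add: Suc)
      also have "\<dots> = - real (Suc n) * ((-1)^i * real (n choose i) * real (Suc i) ^ r)"
        by (simp only: e) (simp add: algebra_simps)
      finally show "(-1)^(Suc i) * real (Suc n choose Suc i) * real (Suc i) ^ m
          = - real (Suc n) * ((-1)^i * real (n choose i) * real (Suc i) ^ r)" .
    qed
    also have "\<dots> = - real (Suc n) * (\<Sum>i\<le>n. (-1)^i * real (n choose i) * real (Suc i) ^ r)"
      by (simp add: sum_distrib_left)
    also have "(\<Sum>i\<le>n. (-1)^i * real (n choose i) * real (Suc i) ^ r)
        = (\<Sum>i\<le>n. \<Sum>t\<le>r. real (r choose t) * ((-1)^i * real (n choose i) * real i ^ t))"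
    proof (rule sum.cong[OF refl])
      fix i
      have "real (Suc i) ^ r = (\<Sum>t\<le>r. real (r choose t) * real i ^ t * 1 ^ (r - t))"
        using binomial_ring[of "real i" 1 r] by (simp add: add.commute)
      then show "(-1)^i * real (n choose i) * real (Suc i) ^ r
          = (\<Sum>t\<le>r. real (r choose t) * ((-1)^i * real (n choose i) * real i ^ t))"
        by (simp add: sum_distrib_left mult_ac)
    qed
    also have "\<dots> = (\<Sum>t\<le>r. real (r choose t) * (\<Sum>i\<le>n. (-1)^i * real (n choose i) * real i ^ t))"
      by (subst sum.swap) (simp add: sum_distrib_left)
    also have "\<dots> = (\<Sum>t\<le>r. real (r choose t) * (if t = n then (-1)^n * fact n else 0))"
      by (rule sum.cong[OF refl]) (use r in \<open>simp add: Suc.IH\<close>)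
    also have "\<dots> = (if r = n then (-1)^n * fact n else 0)"
      using r by (auto simp: if_distrib sum.delta cong: if_cong)
    finally show ?thesis using r Suc by (auto simp: algebra_simps)
  qed
qed

lemma alt_poly:
  fixes p :: "real poly" assumes "degree p \<le> n"
  shows "(\<Sum>i\<le>n. (-1)^i * real (n choose i) * poly p (real i)) = (-1)^n * fact n * coeff p n"
proof -
  have pe: "poly p x = (\<Sum>j\<le>n. coeff p j * x ^ j)" for x
  proof -
    have "poly p x = (\<Sum>j\<le>degree p. coeff p j * x ^ j)" by (rule poly_altdef)
    also have "\<dots> = (\<Sum>j\<le>n. coeff p j * x ^ j)"
      by (rule sum.mono_neutral_left) (use assms in \<open>auto simp: coeff_eq_0\<close>)
    finally show ?thesis .
  qed
  have "(\<Sum>i\<le>n. (-1)^i * real (n choose i) * poly p (real i))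
      = (\<Sum>i\<le>n. \<Sum>j\<le>n. coeff p j * ((-1)^i * real (n choose i) * real i ^ j))"
    by (simp add: pe sum_distrib_left mult_ac)
  also have "\<dots> = (\<Sum>j\<le>n. coeff p j * (\<Sum>i\<le>n. (-1)^i * real (n choose i) * real i ^ j))"
    by (subst sum.swap) (simp add: sum_distrib_left)
  also have "\<dots> = (\<Sum>j\<le>n. coeff p j * (if j = n then (-1)^n * fact n else 0))"
    by (rule sum.cong[OF refl]) (simp add: alt_pow)
  also have "\<dots> = (-1)^n * fact n * coeff p n"
    by (simp add: if_distrib sum.delta cong: if_cong)
  finally show ?thesis .
qed

definition pP :: "real \<Rightarrow> nat \<Rightarrow> real poly" where "pP c m = (\<Prod>j<m. [:c + real j, 1:])"

definition pM :: "real \<Rightarrow> nat \<Rightarrow> real poly" where "pM c m = (\<Prod>j<m. [:c + real j, -1:])"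

lemma pP_props: "poly (pP c m) x = pochhammer (x + c) m \<and> degree (pP c m) = m \<and> coeff (pP c m) m = 1"
proof (induction m)
  case 0
  then show ?case by (simp add: pP_def)
next
  case (Suc m)
  have nz: "pP c m \<noteq> 0" using Suc by auto
  have "pP c (Suc m) = pP c m * [:c + real m, 1:]" by (simp add: pP_def)
  moreover have "degree (pP c m * [:c + real m, 1:]) = Suc m"
    using nz Suc by (subst degree_mult_eq) auto
  moreover have "lead_coeff (pP c m * [:c + real m, 1:]) = 1"
    by (simp only: lead_coeff_mult) (use Suc in simp)
  ultimately show ?case using Suc by (simp add: pochhammer_rec' algebra_simps)
qed

lemma pM_props: "poly (pM c m) x = pochhammer (c - x) m \<and> degree (pM c m) = m \<and> coeff (pM c m) m = (-1)^m"
proof (induction m)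
  case 0
  then show ?case by (simp add: pM_def)
next
  case (Suc m)
  have nz: "pM c m \<noteq> 0" using Suc by auto
  have "pM c (Suc m) = pM c m * [:c + real m, -1:]" by (simp add: pM_def)
  moreover have "degree (pM c m * [:c + real m, -1:]) = Suc m"
    using nz Suc by (subst degree_mult_eq) auto
  moreover have "lead_coeff (pM c m * [:c + real m, -1:]) = (-1)^Suc m"
    by (simp only: lead_coeff_mult) (use Suc in simp)
  ultimately show ?case using Suc by (simp add: pochhammer_rec' algebra_simps)
qed

lemma alt_poch:
  assumes "k \<le> n"
  shows "(\<Sum>i\<le>n. (-1)^i * real (n choose i) *
      (pochhammer (real i + a) k * pochhammer (c - real i) (n - k))) = (-1)^k * fact n"
proof -
  let ?p = "pP a k * pM c (n - k)"
  have d: "degree ?p = n" using pP_props[of a k] pM_props[of c "n-k"] assms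
    by (subst degree_mult_eq) auto
  have "coeff ?p n = (-1)^(n-k)"
    using d pP_props[of a k] pM_props[of c "n-k"] lead_coeff_mult[of "pP a k" "pM c (n-k)"] by simp
  moreover have "(\<Sum>i\<le>n. (-1)^i * real (n choose i) * poly ?p (real i)) = (-1)^n * fact n * coeff ?p n"
    using d by (intro alt_poly) simp
  ultimately have "(\<Sum>i\<le>n. (-1)^i * real (n choose i) * poly ?p (real i)) = (-1)^n * (-1)^(n-k) * fact n"
    by simp
  also have "(-1)^n * (-1)^(n-k) = ((-1)^k :: real)"
  proof -
    have "(-1)^n * (-1)^(n-k) = ((-1)^(n - k + k) * (-1)^(n-k) :: real)" using assms by simp
    also have "\<dots> = (-1)^k * ((-1)^(n-k))^2" by (simp add: power_add power2_eq_square)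
    also have "((-1::real)^(n-k))^2 = 1"
      by (metis power_minus1_even power_mult mult.commute)
    finally show ?thesis by simp
  qed
  finally show ?thesis using pP_props pM_props by simp
qed

lemma pos_not_nonpos_Int: "(z::real) > 0 \<Longrightarrow> z \<notin> \<int>\<^sub>\<le>\<^sub>0"
  by (auto elim!: nonpos_Ints_cases)

lemma poch_Gamma_real: "(z::real) > 0 \<Longrightarrow> pochhammer z m = Gamma (z + real m) / Gamma z"
  by (rule pochhammer_Gamma) (rule pos_not_nonpos_Int)

lemma gchoose_Gamma:
  assumes "x - real m + 1 > 0"
  shows "x gchoose m = Gamma (x + 1) / (fact m * Gamma (x - real m + 1))"
proof -
  have "x gchoose m = pochhammer (x - real m + 1) m / fact m" by (rule gbinomial_pochhammer')
  also have "\<dots> = Gamma (x + 1) / Gamma (x - real m + 1) / fact m"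
    using poch_Gamma_real[OF assms, of m] by simp
  finally show ?thesis by simp
qed

lemma Beta_real_Gamma: "Beta (p::real) q = Gamma p * Gamma q / Gamma (p + q)"
  by (simp add: Beta_altdef rGamma_inverse_Gamma divide_inverse)

lemma Sk:
  assumes a: "a > -1" and b: "b > -1" and k: "k \<le> n"
  shows "(\<Sum>i\<le>n. (-1)^i * (((real n + a) gchoose (n - i)) * ((real n + b) gchoose i))
            * Beta (real (k + i) + a + 1) (real ((n - k) + (n - i)) + b + 1))
       = (-1)^k * (Gamma (real n + a + 1) * Gamma (real n + b + 1) / Gamma (2 * real n + a + b + 2))"
proof -
  define K where "K = Gamma (real n + a + 1) * Gamma (real n + b + 1) / Gamma (2 * real n + a + b + 2)"
  have trm: "(-1)^i * (((real n + a) gchoose (n - i)) * ((real n + b) gchoose i))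
            * Beta (real (k + i) + a + 1) (real ((n - k) + (n - i)) + b + 1)
      = K / fact n * ((-1)^i * real (n choose i) *
      (pochhammer (real i + (a + 1)) k * pochhammer ((real n + b + 1) - real i) (n - k)))"
    if i: "i \<le> n" for i
  proof -
    have g1: "(real n + a) gchoose (n - i) = Gamma (real n + a + 1) / (fact (n - i) * Gamma (real i + a + 1))"
      using gchoose_Gamma[of "real n + a" "n - i"] i a by (simp add: of_nat_diff algebra_simps)
    have g2: "(real n + b) gchoose i = Gamma (real n + b + 1) / (fact i * Gamma (real n - real i + b + 1))"
      using gchoose_Gamma[of "real n + b" "i"] i b by (simp add: algebra_simps)
    have be: "Beta (real (k + i) + a + 1) (real ((n - k) + (n - i)) + b + 1)
       = Gamma (real i + a + 1 + real k) * Gamma (real n - real i + b + 1 + real (n - k)) / Gamma (2 * real n + a + b + 2)"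
      using i k by (simp add: Beta_real_Gamma of_nat_diff algebra_simps)
    have p1: "pochhammer (real i + (a + 1)) k = Gamma (real i + a + 1 + real k) / Gamma (real i + a + 1)"
      using poch_Gamma_real[of "real i + (a + 1)" k] a by (simp add: algebra_simps)
    have p2: "pochhammer ((real n + b + 1) - real i) (n - k) = Gamma (real n - real i + b + 1 + real (n - k)) / Gamma (real n - real i + b + 1)"
      using poch_Gamma_real[of "(real n + b + 1) - real i" "n - k"] b i by (simp add: algebra_simps)
    have ch: "real (n choose i) = fact n / (fact i * fact (n - i))" using binomial_fact[OF i] by simp
    have G1: "Gamma (real i + a + 1) > 0" using a by simp
    have G2: "Gamma (real n - real i + b + 1) > 0" using b i by simp
    have G3: "Gamma (2 * real n + a + b + 2) > 0" using a b by simp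
    show ?thesis
      unfolding g1 g2 be p1 p2 ch K_def using G1 G2 G3
      by (simp add: field_simps)
  qed
  have "(\<Sum>i\<le>n. (-1)^i * (((real n + a) gchoose (n - i)) * ((real n + b) gchoose i))
            * Beta (real (k + i) + a + 1) (real ((n - k) + (n - i)) + b + 1))
     = (\<Sum>i\<le>n. K / fact n * ((-1)^i * real (n choose i) *
      (pochhammer (real i + (a + 1)) k * pochhammer ((real n + b + 1) - real i) (n - k))))"
    by (rule sum.cong[OF refl]) (rule trm, simp)
  also have "\<dots> = K / fact n * ((-1)^k * fact n)"
    by (simp only: sum_distrib_left[symmetric] alt_poch[OF k])
  finally show ?thesis by (simp add: K_def)
qed

lemma beta_int:
  fixes p q :: real
  assumes p: "p > -1" and q: "q > -1"
  shows "((\<lambda>x. (1 - x) powr p * (1 + x) powr q) has_integral (2 powr (p + q + 1) * Beta (p + 1) (q + 1))) {-1..1}"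
proof -
  have "((\<lambda>t. t powr (q + 1 - 1) * (1 - t) powr (p + 1 - 1)) has_integral Beta (q + 1) (p + 1)) {0..1::real}"
    using has_integral_Beta_real[of "q+1" "p+1"] p q by simp
  then have i0: "((\<lambda>t. t powr q * (1 - t) powr p) has_integral Beta (p + 1) (q + 1)) (cbox 0 1)"
    by (simp add: Beta_commute)
  have "((\<lambda>x. (\<lambda>t. t powr q * (1 - t) powr p) ((1/2) *\<^sub>R x + 1/2)) has_integral (1 / \<bar>1/2\<bar> ^ DIM(real)) *\<^sub>R Beta (p + 1) (q + 1))
      ((\<lambda>x. (1 / (1/2)) *\<^sub>R x + - ((1 / (1/2)) *\<^sub>R (1/2))) ` cbox 0 1)"
    by (rule has_integral_affinity[OF i0]) simp
  moreover have "((\<lambda>x. (1 / (1/2::real)) *\<^sub>R x + - ((1 / (1/2)) *\<^sub>R (1/2))) ` cbox 0 1) = {-1..1::real}"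
  proof -
    have "x \<in> (\<lambda>x. 2 * x - 1) ` {0..1::real}" if "-1 \<le> x" "x \<le> 1" for x :: real
      by (rule image_eqI[of _ _ "(x + 1) / 2"]) (use that in \<open>auto simp: field_simps\<close>)
    then show ?thesis by auto
  qed
  ultimately have i1: "((\<lambda>x. ((x + 1) / 2) powr q * ((1 - x) / 2) powr p) has_integral 2 * Beta (p + 1) (q + 1)) {-1..1}"
    by (simp add: field_simps)
  have i2: "((\<lambda>x. 2 powr (p + q) * (((x + 1) / 2) powr q * ((1 - x) / 2) powr p)) has_integral 2 powr (p + q) * (2 * Beta (p + 1) (q + 1))) {-1..1}"
    by (rule has_integral_mult_right[OF i1])
  have e: "2 powr (p + q) * (2 * Beta (p + 1) (q + 1)) = 2 powr (p + q + 1) * Beta (p + 1) (q + 1)"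
    by (simp add: powr_add)
  note i3 = i2[unfolded e]
  have "((\<lambda>x. (1 - x) powr p * (1 + x) powr q) has_integral 2 powr (p + q + 1) * Beta (p + 1) (q + 1)) {-1..1}
    \<longleftrightarrow> ((\<lambda>x. 2 powr (p + q) * (((x + 1) / 2) powr q * ((1 - x) / 2) powr p)) has_integral 2 powr (p + q + 1) * Beta (p + 1) (q + 1)) {-1..1}"
  proof (rule has_integral_cong)
    fix x :: real assume x: "x \<in> {-1..1}"
    have "((x + 1) / 2) powr q * ((1 - x) / 2) powr p = (x + 1) powr q / 2 powr q * ((1 - x) powr p / 2 powr p)"
      using x by (simp add: powr_divide)
    then show "(1 - x) powr p * (1 + x) powr q = 2 powr (p + q) * (((x + 1) / 2) powr q * ((1 - x) / 2) powr p)"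
      by (simp add: powr_add field_simps)
  qed
  with i3 show ?thesis by simp
qed

lemma powr_pow_mult: "(y::real) \<ge> 0 \<Longrightarrow> y ^ m * y powr a = y powr (real m + a)"
  by (cases "y = 0") (auto simp: powr_add powr_realpow)

definition cc :: "real \<Rightarrow> real \<Rightarrow> nat \<Rightarrow> nat \<Rightarrow> real" where
  "cc a b n k = ((real n + a) gchoose (n - k)) * ((real n + b) gchoose k)"

lemma jacobiP_expand:
  "jacobiP a b n x = (\<Sum>k\<le>n. cc a b n k * (-1)^k / 2^n * ((1 - x)^k * (1 + x)^(n - k)))"
  unfolding jacobiP_def atLeast0AtMost
proof (rule sum.cong[OF refl])
  fix k assume "k \<in> {..n}"
  then have k: "k \<le> n" by simp
  have 1: "((x - 1) / 2) ^ k = (-1)^k * (1 - x)^k / 2^k"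
    by (simp add: power_divide power_minus[symmetric])
  have 2: "((x + 1) / 2) ^ (n - k) = (1 + x)^(n - k) / 2^(n - k)"
    by (simp add: power_divide add.commute)
  have 3: "(2::real)^n = 2^k * 2^(n - k)" using k by (simp flip: power_add)
  show "((real n + a) gchoose (n - k)) * ((real n + b) gchoose k) * ((x - 1) / 2) ^ k * ((x + 1) / 2) ^ (n - k)
      = cc a b n k * (-1)^k / 2^n * ((1 - x)^k * (1 + x)^(n - k))"
    unfolding 1 2 3 cc_def by (simp add: field_simps)
qed

lemma integrand_expand:
  assumes x: "x \<in> {-1..1}"
  shows "(jacobiP a b n x)\<^sup>2 * jacobi_weight a b x =
    (\<Sum>k\<le>n. \<Sum>i\<le>n. (cc a b n k * (-1)^k) * (cc a b n i * (-1)^i) / 4^n *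
        ((1 - x) powr (real (k + i) + a) * (1 + x) powr (real ((n - k) + (n - i)) + b)))"
proof -
  have x1: "1 - x \<ge> 0" "1 + x \<ge> 0" using x by auto
  have "(jacobiP a b n x)\<^sup>2 * jacobi_weight a b x =
     (\<Sum>k\<le>n. \<Sum>i\<le>n. (cc a b n k * (-1)^k / 2^n * ((1 - x)^k * (1 + x)^(n - k))) *
          (cc a b n i * (-1)^i / 2^n * ((1 - x)^i * (1 + x)^(n - i))) * jacobi_weight a b x)"
    unfolding jacobiP_expand power2_eq_square sum_product by (simp add: sum_distrib_right)
  also have "\<dots> = (\<Sum>k\<le>n. \<Sum>i\<le>n. (cc a b n k * (-1)^k) * (cc a b n i * (-1)^i) / 4^n *
        ((1 - x) powr (real (k + i) + a) * (1 + x) powr (real ((n - k) + (n - i)) + b)))"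
  proof (intro sum.cong refl)
    fix k i
    have e1: "(1 - x)^k * (1 - x)^i * (1 - x) powr a = (1 - x) powr (real (k + i) + a)"
      using powr_pow_mult[OF x1(1), of "k + i" a] by (simp add: power_add)
    have e2: "(1 + x)^(n - k) * (1 + x)^(n - i) * (1 + x) powr b = (1 + x) powr (real ((n - k) + (n - i)) + b)"
      using powr_pow_mult[OF x1(2), of "(n - k) + (n - i)" b] by (simp add: power_add)
    have e4: "(4::real)^n = 2^n * 2^n" by (simp flip: power_mult_distrib)
    show "(cc a b n k * (-1)^k / 2^n * ((1 - x)^k * (1 + x)^(n - k))) *
          (cc a b n i * (-1)^i / 2^n * ((1 - x)^i * (1 + x)^(n - i))) * jacobi_weight a b x
        = (cc a b n k * (-1)^k) * (cc a b n i * (-1)^i) / 4^n *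
        ((1 - x) powr (real (k + i) + a) * (1 + x) powr (real ((n - k) + (n - i)) + b))"
      unfolding jacobi_weight_def e4 e1[symmetric] e2[symmetric] by (simp add: field_simps)
  qed
  finally show ?thesis .
qed

definition hval :: "real \<Rightarrow> real \<Rightarrow> nat \<Rightarrow> real" where
  "hval a b n = 2 powr (a + b + 1) * (Gamma (real n + a + 1) * Gamma (real n + b + 1) / Gamma (2 * real n + a + b + 2))
      * ((2 * real n + a + b) gchoose n)"

lemma jacobi_has_integral:
  assumes a: "a > -1" and b: "b > -1"
  shows "((\<lambda>x. (jacobiP a b n x)\<^sup>2 * jacobi_weight a b x) has_integral hval a b n) {-1..1}"
proof -
  define C where "C k i = (cc a b n k * (-1)^k) * (cc a b n i * (-1)^i) / 4^n" for k i
  define B where "B k i = Beta (real (k + i) + a + 1) (real ((n - k) + (n - i)) + b + 1)" for k i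
  define K where "K = Gamma (real n + a + 1) * Gamma (real n + b + 1) / Gamma (2 * real n + a + b + 2)"
  have ex: "2 powr (real (k + i) + a + (real ((n - k) + (n - i)) + b) + 1) = 4^n * 2 powr (a + b + 1)"
    if "k \<le> n" "i \<le> n" for k i
  proof -
    have "real (k + i) + a + (real ((n - k) + (n - i)) + b) + 1 = real (2 * n) + (a + b + 1)"
      using that by (simp add: of_nat_diff)
    then have "2 powr (real (k + i) + a + (real ((n - k) + (n - i)) + b) + 1) = 2 powr real (2 * n) * 2 powr (a + b + 1)"
      by (simp add: powr_add)
    also have "2 powr real (2 * n) = (2::real)^(2 * n)"
      by (rule powr_realpow) simp
    also have "(2::real)^(2 * n) = 4^n"
      by (simp add: power_mult)
    finally show ?thesis .
  qed
  have hi: "((\<lambda>x. \<Sum>k\<le>n. \<Sum>i\<le>n. C k i * ((1 - x) powr (real (k + i) + a) * (1 + x) powr (real ((n - k) + (n - i)) + b)))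
      has_integral (\<Sum>k\<le>n. \<Sum>i\<le>n. C k i * (2 powr (real (k + i) + a + (real ((n - k) + (n - i)) + b) + 1) * B k i))) {-1..1}"
    unfolding B_def
    by (intro has_integral_sum finite_atMost ballI has_integral_mult_right beta_int) (use a b in auto)
  have "(\<Sum>k\<le>n. \<Sum>i\<le>n. C k i * (2 powr (real (k + i) + a + (real ((n - k) + (n - i)) + b) + 1) * B k i))
      = (\<Sum>k\<le>n. \<Sum>i\<le>n. 2 powr (a + b + 1) * (cc a b n k * (-1)^k) * ((-1)^i * cc a b n i * B k i))"
  proof (intro sum.cong refl)
    fix k i assume ki: "k \<in> {..n}" "i \<in> {..n}"
    have e: "2 powr (real (k + i) + a + (real ((n - k) + (n - i)) + b) + 1) = 4^n * 2 powr (a + b + 1)"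
      using ki by (intro ex) auto
    show "C k i * (2 powr (real (k + i) + a + (real ((n - k) + (n - i)) + b) + 1) * B k i)
      = 2 powr (a + b + 1) * (cc a b n k * (-1)^k) * ((-1)^i * cc a b n i * B k i)"
      unfolding e C_def by (simp add: field_simps)
  qed
  also have "\<dots> = 2 powr (a + b + 1) * (\<Sum>k\<le>n. (cc a b n k * (-1)^k) * (\<Sum>i\<le>n. (-1)^i * cc a b n i * B k i))"
    by (simp add: sum_distrib_left mult_ac)
  also have "\<dots> = 2 powr (a + b + 1) * (\<Sum>k\<le>n. (cc a b n k * (-1)^k) * ((-1)^k * K))"
  proof -
    have "(\<Sum>i\<le>n. (-1)^i * cc a b n i * B k i) = (-1)^k * K" if k: "k \<le> n" for k
      unfolding cc_def B_def K_def by (rule Sk[OF a b k])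
    then show ?thesis by simp
  qed
  also have "\<dots> = 2 powr (a + b + 1) * K * (\<Sum>k\<le>n. cc a b n k)"
    by (simp add: sum_distrib_left sum_distrib_right mult_ac flip: power_add)
  also have "(\<Sum>k\<le>n. cc a b n k) = (2 * real n + a + b) gchoose n"
  proof -
    have "(\<Sum>k\<le>n. cc a b n k) = (\<Sum>k=0..n. ((real n + b) gchoose k) * ((real n + a) gchoose (n - k)))"
      by (simp add: cc_def atLeast0AtMost mult.commute)
    also have "\<dots> = (real n + b + (real n + a)) gchoose n" by (rule gbinomial_Vandermonde)
    finally show ?thesis by (simp add: algebra_simps)
  qed
  finally have v: "(\<Sum>k\<le>n. \<Sum>i\<le>n. C k i * (2 powr (real (k + i) + a + (real ((n - k) + (n - i)) + b) + 1) * B k i)) = hval a b n"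
    by (simp add: hval_def K_def)
  have "((\<lambda>x. (jacobiP a b n x)\<^sup>2 * jacobi_weight a b x) has_integral hval a b n) {-1..1}
     \<longleftrightarrow> ((\<lambda>x. \<Sum>k\<le>n. \<Sum>i\<le>n. C k i * ((1 - x) powr (real (k + i) + a) * (1 + x) powr (real ((n - k) + (n - i)) + b))) has_integral hval a b n) {-1..1}"
    by (rule has_integral_cong) (simp add: integrand_expand C_def)
  with hi v show ?thesis by simp
qed

lemma jacobi_norm:
  assumes a: "a > -1" and b: "b > -1"
  shows "(LBINT t=-1..1. (jacobiP a b n t)\<^sup>2 * jacobi_weight a b t) = hval a b n"
proof -
  define f where "f t = (jacobiP a b n t)\<^sup>2 * jacobi_weight a b t" for t
  have hi: "(f has_integral hval a b n) {-1..1}" unfolding f_def by (rule jacobi_has_integral[OF a b])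
  have nn: "0 \<le> f x" for x unfolding f_def jacobi_weight_def by simp
  have "f absolutely_integrable_on {-1..1}"
    using hi nn by (intro nonnegative_absolutely_integrable_1) (auto simp: integrable_on_def)
  then have il: "integrable lebesgue (\<lambda>x. indicator {-1..1} x *\<^sub>R f x)"
    by (simp add: set_integrable_def)
  have m: "(\<lambda>x. indicator {-1..1::real} x *\<^sub>R f x) \<in> borel_measurable lborel"
    unfolding f_def jacobiP_def jacobi_weight_def by measurable
  have "integrable lborel (\<lambda>x. indicator {-1..1} x *\<^sub>R f x)"
    using integrable_completion[OF m] il by simp
  then have si: "set_integrable lborel {-1..1} f" by (simp add: set_integrable_def)
  have "interval_lebesgue_integral lborel (ereal (-1)) (ereal 1) f = integral {-1..1} f"
    by (rule interval_integral_eq_integral[OF _ si]) simp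
  then have "(LBINT t=-1..1. f t) = integral {-1..1} f"
    by (simp add: one_ereal_def)
  also have "\<dots> = hval a b n" using hi by (rule integral_unique)
  finally show ?thesis by (simp add: f_def)
qed

lemma jacobiP_at1: "jacobiP a b n 1 = (real n + a) gchoose n"
proof -
  have "jacobiP a b n 1 = (\<Sum>k=0..n. if k = 0 then (real n + a) gchoose n else 0)"
    unfolding jacobiP_def by (rule sum.cong) auto
  then show ?thesis by simp
qed

lemma Gamma_rec: "(z::real) > 0 \<Longrightarrow> Gamma (z + 1) = z * Gamma z"
  by (rule Gamma_plus1) (auto elim!: nonpos_Ints_cases)

lemma fact_Gamma: "fact n = Gamma (real n + 1)"
  using Gamma_fact[of n, where 'a=real] by (simp add: add.commute)

lemma p_at1: "jacobi_p a b n 1 = ((real n + a) gchoose n) / sqrt (hval a b n)"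
  if "a > -1" "b > -1"
  unfolding jacobi_p_def jacobiP_at1 jacobi_norm[OF that] ..

lemma hval_pos: assumes "a > -1" "b > -1" "a + b \<ge> -1" shows "hval a b n > 0"
proof -
  have "(2 * real n + a + b) gchoose n = Gamma (2 * real n + a + b + 1) / (fact n * Gamma (real n + a + b + 1))"
    if "n > 0" using gchoose_Gamma[of "2 * real n + a + b" n] that assms by (simp add: algebra_simps)
  moreover have "Gamma (2 * real n + a + b + 1) > 0" "Gamma (real n + a + b + 1) > 0" if "n > 0"
    using that assms by auto
  ultimately have "(2 * real n + a + b) gchoose n > 0"
    by (cases "n = 0") auto
  then show ?thesis unfolding hval_def using assms by simp
qed

lemma p_sq_Gamma:
  assumes a: "a > -1" and b: "b > -1" and ab: "a + b \<ge> -1" and n: "n \<ge> 1"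
  shows "(jacobi_p a b n 1)\<^sup>2 = Gamma (real n + a + 1) * (2 * real n + a + b + 1) * Gamma (real n + a + b + 1)
      / (2 powr (a + b + 1) * Gamma (real n + 1) * (Gamma (a + 1))\<^sup>2 * Gamma (real n + b + 1))"
proof -
  have P: "(real n + a) gchoose n = Gamma (real n + a + 1) / (Gamma (real n + 1) * Gamma (a + 1))"
    using gchoose_Gamma[of "real n + a" n] a by (simp add: fact_Gamma)
  have Q: "(2 * real n + a + b) gchoose n = Gamma (2 * real n + a + b + 1) / (Gamma (real n + 1) * Gamma (real n + a + b + 1))"
    using gchoose_Gamma[of "2 * real n + a + b" n] n ab by (simp add: fact_Gamma algebra_simps)
  have R: "Gamma (2 * real n + a + b + 2) = (2 * real n + a + b + 1) * Gamma (2 * real n + a + b + 1)"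
    using Gamma_rec[of "2 * real n + a + b + 1"] n ab by (simp add: algebra_simps)
  have hp: "hval a b n > 0" using hval_pos a b ab by blast
  have "(jacobi_p a b n 1)\<^sup>2 = ((real n + a) gchoose n)\<^sup>2 / hval a b n"
    using hp by (simp add: p_at1[OF a b] power_divide)
  also have "\<dots> = Gamma (real n + a + 1) * (2 * real n + a + b + 1) * Gamma (real n + a + b + 1)
      / (2 powr (a + b + 1) * Gamma (real n + 1) * (Gamma (a + 1))\<^sup>2 * Gamma (real n + b + 1))"
  proof -
    have g: "Gamma (real n + a + 1) > 0" "Gamma (real n + b + 1) > 0" "Gamma (real n + 1) > 0" "Gamma (a + 1) > 0"
      "Gamma (2 * real n + a + b + 1) > 0" "Gamma (real n + a + b + 1) > 0" "2 * real n + a + b + 1 > 0"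
      using a b ab n by auto
    have key: "\<And>gna gnb gn ga g2 gnab s (P::real). gna > 0 \<Longrightarrow> gnb > 0 \<Longrightarrow> gn > 0 \<Longrightarrow> ga > 0 \<Longrightarrow> g2 > 0 \<Longrightarrow> gnab > 0 \<Longrightarrow> s > 0 \<Longrightarrow> P > 0 \<Longrightarrow>
       (gna / (gn * ga))\<^sup>2 / (P * (gna * gnb / (s * g2)) * (g2 / (gn * gnab)))
       = gna * s * gnab / (P * gn * ga\<^sup>2 * gnb)"
      by (simp add: divide_simps power2_eq_square)
    show ?thesis unfolding hval_def P Q R
      by (rule key) (use g in auto)
  qed
  finally show ?thesis .
qed

definition Tk :: "real \<Rightarrow> real \<Rightarrow> nat \<Rightarrow> real" where
  "Tk a b n = real n * (real n + b) * Gamma (real n + a + b + 1) * Gamma (real n + a + 1)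
     / (2 powr (a + b + 1) * Gamma (a + 1) * Gamma (a + 2) * Gamma (real n + 1) * Gamma (real n + b + 1))"

lemma K_closed:
  assumes a: "a > -1" and b: "b > -1" and ab: "a + b \<ge> -1" and n: "n \<ge> 1"
  shows "jacobi_K a b n 1 = Tk a b n"
  using n
proof (induction n rule: nat_induct_at_least)
  case base
  have h0: "hval a b 0 = 2 powr (a + b + 1) * (Gamma (a + 1) * Gamma (b + 1) / Gamma (a + b + 2))"
    by (simp add: hval_def)
  have g: "Gamma (a + 1) > 0" "Gamma (b + 1) > 0" "Gamma (a + b + 2) > 0" using a b ab by auto
  have G2: "Gamma (a + 2) = (a + 1) * Gamma (a + 1)" using Gamma_rec[of "a + 1"] a by (simp add: add.assoc)
  have G3: "Gamma (b + 2) = (b + 1) * Gamma (b + 1)" using Gamma_rec[of "b + 1"] b by (simp add: add.assoc)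
  have "jacobi_K a b 1 1 = 1 / hval a b 0"
    unfolding jacobi_K_def using p_at1[OF a b, of 0] hval_pos[OF a b ab, of 0]
    by (simp add: power2_eq_square[symmetric] power_divide)
  also have "\<dots> = Tk a b 1"
  proof -
    have key: "\<And>ga gb gab g2 P. ga > 0 \<Longrightarrow> gb > 0 \<Longrightarrow> gab > 0 \<Longrightarrow> b + 1 > 0 \<Longrightarrow> a + 1 > 0 \<Longrightarrow> P > 0 \<Longrightarrow>
      1 / (P * (ga * gb / gab)) = 1 * (1 + b) * gab * ((a + 1) * ga) / (P * ga * ((a + 1) * ga) * 1 * ((b + 1) * gb))"
      by (simp add: divide_simps)
    have "Gamma (real 1 + a + b + 1) = Gamma (a + b + 2)" "Gamma (real 1 + a + 1) = Gamma (a + 2)"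
      "Gamma (real 1 + b + 1) = Gamma (b + 2)" "Gamma (real 1 + 1) = 1"
      using Gamma_fact[of 1, where 'a=real] by (simp_all add: add_ac)
    then show ?thesis unfolding h0 Tk_def G2 G3
      by (simp only: of_nat_1) (rule key, use g a b in auto)
  qed
  finally show ?case .
next
  case (Suc n)
  have g: "Gamma (real n + a + 1) > 0" "Gamma (real n + b + 1) > 0" "Gamma (real n + 1) > 0" "Gamma (a + 1) > 0"
      "Gamma (real n + a + b + 1) > 0"
      using a b ab Suc by auto
  have r1: "Gamma (real (Suc n) + a + b + 1) = (real n + a + b + 1) * Gamma (real n + a + b + 1)"
    using Gamma_rec[of "real n + a + b + 1"] a b ab Suc by (simp add: algebra_simps)
  have r2: "Gamma (real (Suc n) + a + 1) = (real n + a + 1) * Gamma (real n + a + 1)"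
    using Gamma_rec[of "real n + a + 1"] a by (simp add: algebra_simps)
  have r3: "Gamma (real (Suc n) + 1) = (real n + 1) * Gamma (real n + 1)"
    using Gamma_rec[of "real n + 1"] by (simp add: algebra_simps)
  have r4: "Gamma (real (Suc n) + b + 1) = (real n + b + 1) * Gamma (real n + b + 1)"
    using Gamma_rec[of "real n + b + 1"] b by (simp add: algebra_simps)
  have G2: "Gamma (a + 2) = (a + 1) * Gamma (a + 1)" using Gamma_rec[of "a + 1"] a by (simp add: add.assoc)
  have "jacobi_K a b (Suc n) 1 = jacobi_K a b n 1 + (jacobi_p a b n 1)\<^sup>2"
    by (simp add: jacobi_K_def power2_eq_square)
  also have "\<dots> = Tk a b n + (jacobi_p a b n 1)\<^sup>2" using Suc by simp
  also have "\<dots> = Tk a b (Suc n)"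
  proof -
    have key: "\<And>gnab gna ga gn gnb P. gnab > 0 \<Longrightarrow> gna > 0 \<Longrightarrow> ga > 0 \<Longrightarrow> gn > 0 \<Longrightarrow> gnb > 0 \<Longrightarrow> P > 0 \<Longrightarrow>
       real n + b + 1 > 0 \<Longrightarrow> a + 1 > 0 \<Longrightarrow>
       real n * (real n + b) * gnab * gna / (P * ga * ((a + 1) * ga) * gn * gnb) +
       gna * (2 * real n + a + b + 1) * gnab / (P * gn * ga\<^sup>2 * gnb) =
       real (Suc n) * (real (Suc n) + b) * ((real n + a + b + 1) * gnab) * ((real n + a + 1) * gna) /
       (P * ga * ((a + 1) * ga) * ((real n + 1) * gn) * ((real n + b + 1) * gnb))"
      by (simp add: divide_simps power2_eq_square) (simp add: algebra_simps)
    show ?thesis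
      unfolding p_sq_Gamma[OF a b ab Suc(1)] Tk_def r1 r2 r3 r4 G2
      by (rule key) (use g a b Suc(1) in auto)
  qed
  finally show ?case .
qed

lemma lnG_conv:
  assumes "(u::real) > 0" "v > 0" "0 \<le> t" "t \<le> 1"
  shows "ln (Gamma ((1 - t) * u + t * v)) \<le> (1 - t) * ln (Gamma u) + t * ln (Gamma v)"
  using convex_onD[OF log_convex_Gamma_real, of t u v] assms by (simp add: o_def)

lemma Gamma_ub01:
  assumes x: "(x::real) > 0" and s: "0 \<le> s" "s \<le> 1"
  shows "Gamma (x + s) \<le> Gamma x * x powr s"
proof -
  have "ln (Gamma ((1 - s) * x + s * (x + 1))) \<le> (1 - s) * ln (Gamma x) + s * ln (Gamma (x + 1))"
    using lnG_conv[of x "x + 1" s] x s by simp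
  also have "ln (Gamma (x + 1)) = ln x + ln (Gamma x)"
    using ln_mult_pos[OF x Gamma_real_pos[OF x]] Gamma_rec[OF x] by simp
  finally have "ln (Gamma (x + s)) \<le> ln (Gamma x) + s * ln x"
    by (simp add: algebra_simps)
  then have "exp (ln (Gamma (x + s))) \<le> exp (ln (Gamma x) + s * ln x)" by simp
  then show ?thesis using x s by (simp add: exp_add powr_def)
qed

lemma Gamma_lb01:
  assumes x: "(x::real) > 0" and s: "0 \<le> s" "s \<le> 1"
  shows "Gamma x * x powr s * (x / (x + 1)) \<le> Gamma (x + s)"
proof -
  have "ln (Gamma (s * (x + s) + (1 - s) * (x + s + 1))) \<le> s * ln (Gamma (x + s)) + (1 - s) * ln (Gamma (x + s + 1))"
    using lnG_conv[of "x + s" "x + s + 1" "1 - s"] x s by simp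
  also have "ln (Gamma (x + s + 1)) = ln (x + s) + ln (Gamma (x + s))"
  proof -
    have xs: "x + s > 0" using x s by simp
    show ?thesis using ln_mult_pos[OF xs Gamma_real_pos[OF xs]] Gamma_rec[OF xs] by simp
  qed
  finally have "ln (Gamma (x + 1)) \<le> ln (Gamma (x + s)) + (1 - s) * ln (x + s)"
    by (simp add: algebra_simps)
  then have "exp (ln (Gamma (x + 1))) \<le> exp (ln (Gamma (x + s)) + (1 - s) * ln (x + s))" by simp
  then have i: "x * Gamma x \<le> Gamma (x + s) * (x + s) powr (1 - s)"
    using x s by (simp add: exp_add powr_def Gamma_rec)
  have p: "(x + s) powr (1 - s) * x powr s \<le> x + 1"
  proof -
    have "(x + s) powr (1 - s) * x powr s \<le> (x + 1) powr (1 - s) * (x + 1) powr s"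
      using x s by (intro mult_mono powr_mono2) auto
    also have "\<dots> = x + 1" using x by (simp flip: powr_add)
    finally show ?thesis .
  qed
  have gx: "Gamma (x + s) > 0" "Gamma x > 0" using x s by auto
  have "Gamma x * x powr s * (x / (x + 1)) = (x * Gamma x) * x powr s / (x + 1)" using x by simp
  also have "\<dots> \<le> Gamma (x + s) * (x + s) powr (1 - s) * x powr s / (x + 1)"
    using i x by (intro divide_right_mono mult_right_mono) auto
  also have "\<dots> = Gamma (x + s) * ((x + s) powr (1 - s) * x powr s / (x + 1))" by simp
  also have "\<dots> \<le> Gamma (x + s) * 1"
    using p x gx by (intro mult_left_mono) auto
  finally show ?thesis by simp
qed

lemma Gamma_bounds_pos:
  assumes x: "(x::real) > 0" and s: "0 \<le> s"
  shows "Gamma (x + s) \<le> Gamma x * (x + s) powr s \<and> Gamma x * x powr s * (x / (x + 1)) \<le> Gamma (x + s)"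
proof -
  have "\<forall>s. 0 \<le> s \<and> s \<le> real m \<longrightarrow> Gamma (x + s) \<le> Gamma x * (x + s) powr s \<and> Gamma x * x powr s * (x / (x + 1)) \<le> Gamma (x + s)" for m
  proof (induction m)
    case 0
    then show ?case using x by (auto simp: field_simps)
  next
    case (Suc m)
    show ?case
    proof (intro allI impI)
      fix s assume s: "0 \<le> s \<and> s \<le> real (Suc m)"
      show "Gamma (x + s) \<le> Gamma x * (x + s) powr s \<and> Gamma x * x powr s * (x / (x + 1)) \<le> Gamma (x + s)"
      proof (cases "s \<le> 1")
        case True
        have "Gamma x * x powr s \<le> Gamma x * (x + s) powr s"
          using x s by (intro mult_left_mono powr_mono2) auto
        moreover have "Gamma (x + s) \<le> Gamma x * x powr s" using Gamma_ub01[of x s] True s x by auto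
        moreover have "Gamma x * x powr s * (x / (x + 1)) \<le> Gamma (x + s)" using Gamma_lb01[of x s] True s x by auto
        ultimately show ?thesis by linarith
      next
        case False
        define r where "r = s - 1"
        have r: "0 \<le> r" "r \<le> real m" using s False by (auto simp: r_def)
        have IH: "Gamma (x + r) \<le> Gamma x * (x + r) powr r" "Gamma x * x powr r * (x / (x + 1)) \<le> Gamma (x + r)"
          using Suc.IH r by auto
        have eq: "Gamma (x + s) = (x + r) * Gamma (x + r)"
          using Gamma_rec[of "x + r"] x r by (simp add: r_def)
        have gx: "Gamma x > 0" using x by simp
        have "Gamma (x + s) \<le> (x + r) * (Gamma x * (x + r) powr r)"
          unfolding eq using IH x r by (intro mult_left_mono) auto
        also have "\<dots> \<le> (x + s) * (Gamma x * (x + s) powr r)"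
          using x r gx by (intro mult_mono mult_left_mono powr_mono2) (auto simp: r_def)
        also have "\<dots> = Gamma x * (x + s) powr s"
          using x r by (simp add: r_def powr_add powr_diff field_simps)
        finally have u: "Gamma (x + s) \<le> Gamma x * (x + s) powr s" .
        have xs: "x powr s = x * x powr r" using x by (simp add: r_def powr_diff)
        have "Gamma x * x powr s * (x / (x + 1)) = x * (Gamma x * x powr r * (x / (x + 1)))"
          by (simp only: xs) (simp add: mult_ac)
        also have "\<dots> \<le> (x + r) * Gamma (x + r)"
          using IH x r by (intro mult_mono) auto
        finally have l: "Gamma x * x powr s * (x / (x + 1)) \<le> Gamma (x + s)" using eq by simp
        show ?thesis using u l by simp
      qed
    qed
  qed
  moreover obtain m :: nat where "s \<le> real m" using real_arch_simple by blast
  ultimately show ?thesis using s by blast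
qed

lemma Gamma_ratio:
  assumes x: "(x::real) \<ge> 1" and s: "s \<ge> -1/2"
  shows "Gamma x * x powr s / 2 \<le> Gamma (x + s) \<and> Gamma (x + s) \<le> 6 * exp (s\<^sup>2 / x) * (Gamma x * x powr s)"
proof (cases "s \<ge> 0")
  case True
  note B = Gamma_bounds_pos[of x s]
  have gx: "Gamma x > 0" using x by simp
  have "x / (x + 1) \<ge> 1/2" using x by (simp add: field_simps)
  then have "Gamma x * x powr s * (1/2) \<le> Gamma x * x powr s * (x / (x + 1))"
    using gx by (intro mult_left_mono) auto
  then have "Gamma x * x powr s / 2 \<le> Gamma x * x powr s * (x / (x + 1))" by simp
  then have l: "Gamma x * x powr s / 2 \<le> Gamma (x + s)" using B x True by linarith
  have e: "x * (1 + s / x) = x + s" using x by (simp add: distrib_left)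
  have "(x + s) powr s = x powr s * (1 + s / x) powr s"
    unfolding e[symmetric] using x True by (auto intro: powr_mult)
  also have "(1 + s / x) powr s = exp (s * ln (1 + s / x))"
  proof -
    have "1 + s / x > 0" using x True by (simp add: add_pos_nonneg)
    then show ?thesis by (simp add: powr_def)
  qed
  also have "\<dots> \<le> exp (s * (s / x))"
    using x True by (intro exp_le_cancel_iff[THEN iffD2] mult_left_mono ln_add_one_self_le_self) auto
  finally have "(x + s) powr s \<le> x powr s * exp (s\<^sup>2 / x)"
    by (simp add: power2_eq_square mult_left_mono)
  then have "Gamma x * (x + s) powr s \<le> Gamma x * (x powr s * exp (s\<^sup>2 / x))"
    using gx by (intro mult_left_mono) auto
  moreover have "Gamma (x + s) \<le> Gamma x * (x + s) powr s" using B x True by auto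
  ultimately have "Gamma (x + s) \<le> Gamma x * (x powr s * exp (s\<^sup>2 / x))" by linarith
  also have "\<dots> \<le> 6 * exp (s\<^sup>2 / x) * (Gamma x * x powr s)"
  proof -
    have "0 \<le> Gamma x * x powr s * exp (s\<^sup>2 / x)" using gx by simp
    then show ?thesis by (simp add: mult_ac)
  qed
  finally show ?thesis using l by simp
next
  case False
  define t where "t = - s"
  define y where "y = x + s"
  have t: "0 < t" "t \<le> 1/2" using False s by (auto simp: t_def)
  have y: "y \<ge> 1/2" "y \<ge> x / 2" using x s by (auto simp: y_def)
  have xy: "x = y + t" by (simp add: t_def y_def)
  have B: "Gamma x \<le> Gamma y * x powr t" "Gamma y * y powr t * (y / (y + 1)) \<le> Gamma x"
    using Gamma_bounds_pos[of y t] y t xy by auto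
  have gy: "Gamma y > 0" using y by simp
  have gx: "Gamma x > 0" using x by simp
  have xp: "x powr s * x powr t = 1" using x by (simp add: t_def flip: powr_add)
  have "Gamma x * x powr s \<le> Gamma y * x powr t * x powr s"
    using B(1) x by (intro mult_right_mono) auto
  also have "\<dots> = Gamma y" using xp by (simp add: mult_ac)
  finally have l0: "Gamma x * x powr s \<le> Gamma (x + s)" by (simp add: y_def)
  have "0 \<le> Gamma x * x powr s" using gx by simp
  then have l: "Gamma x * x powr s / 2 \<le> Gamma (x + s)"
    using l0 by linarith
  have yt: "y powr t \<ge> x powr t / 2"
  proof -
    have A: "y powr t \<ge> (x / 2) powr t" using y t x by (intro powr_mono2) auto
    have B: "(x / 2) powr t = x powr t / 2 powr t" using x by (simp add: powr_divide)
    have "2 powr t \<le> 2 powr 1" using t by (intro powr_mono) auto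
    then have C: "x powr t / 2 powr 1 \<le> x powr t / 2 powr t"
      using x by (intro divide_left_mono) auto
    have D: "x powr t / 2 powr 1 = x powr t / 2" by simp
    show ?thesis using A B C D by linarith
  qed
  have "Gamma y * (x powr t / 2) * (1/3) \<le> Gamma y * y powr t * (y / (y + 1))"
  proof -
    have "y / (y + 1) \<ge> 1/3" using y by (simp add: field_simps)
    then show ?thesis using yt gy x by (intro mult_mono mult_left_mono) auto
  qed
  then have "Gamma y * (x powr t / 2) * (1/3) \<le> Gamma x" using B(2) by linarith
  then have "Gamma y * x powr t \<le> 6 * Gamma x" by simp
  then have "Gamma y * x powr t * x powr s \<le> 6 * Gamma x * x powr s"
    using x by (intro mult_right_mono) auto
  then have "Gamma y \<le> 6 * Gamma x * x powr s" using xp by (simp add: mult_ac)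
  also have "\<dots> \<le> 6 * exp (s\<^sup>2 / x) * (Gamma x * x powr s)"
  proof -
    have "1 \<le> exp (s\<^sup>2 / x)" using x by simp
    moreover have "0 \<le> 6 * Gamma x * x powr s" using gx by simp
    ultimately have "6 * Gamma x * x powr s * 1 \<le> 6 * Gamma x * x powr s * exp (s\<^sup>2 / x)"
      by (intro mult_left_mono) auto
    then show ?thesis by (simp add: mult_ac)
  qed
  finally show ?thesis using l by (simp add: y_def)
qed

lemma pw_bounds:
  fixes u s :: real
  assumes u: "1 \<le> u" and s: "-1/2 \<le> s" and u4: "s < 0 \<Longrightarrow> u \<le> 4"
  shows "1/2 \<le> u powr s \<and> u powr s \<le> exp (max s 0 * (u - 1))"
proof (cases "s \<ge> 0")
  case True
  have "u powr s = exp (s * ln u)" using u by (simp add: powr_def)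
  also have "\<dots> \<le> exp (s * (u - 1))"
    using u True ln_le_minus_one[of u] by (intro exp_le_cancel_iff[THEN iffD2] mult_left_mono) auto
  finally have "u powr s \<le> exp (max s 0 * (u - 1))" using True by simp
  moreover have "1 \<le> u powr s" using u True by (simp add: ge_one_powr_ge_zero)
  ultimately show ?thesis by simp
next
  case False
  have "u powr s \<le> u powr 0" using u False by (intro powr_mono) auto
  then have "u powr s \<le> 1" using u by simp
  moreover have "u powr (-1/2) \<le> u powr s" using u s by (intro powr_mono) auto
  moreover have "4 powr (-1/2) \<le> u powr (-1/2)"
    using u u4 False by (intro powr_mono2') auto
  moreover have "(4::real) powr (-1/2) = 1/2"
  proof -
    have "(4::real) powr (-1/2) = inverse (4 powr (1/2))" by (simp add: powr_minus_divide powr_minus)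
    also have "(4::real) powr (1/2) = 2" by (simp add: powr_half_sqrt)
    finally show ?thesis by simp
  qed
  ultimately show ?thesis using False by simp
qed

definition AA :: "real \<Rightarrow> nat \<Rightarrow> real" where
  "AA a n = Gamma (real n + a + 1) / (Gamma (real n + 1) * real n powr a)"

definition BB :: "real \<Rightarrow> real \<Rightarrow> nat \<Rightarrow> real" where
  "BB a b n = Gamma (real n + a + b + 1) / (Gamma (real n + b + 1) * real n powr a)"

lemma ratio_general:
  fixes x n s :: real
  assumes x: "x \<ge> 1" and n: "n > 0" and s: "s \<ge> -1/2" and u4: "s < 0 \<Longrightarrow> x / n \<le> 4"
    and xn: "x \<ge> n" and E1: "s\<^sup>2 / x \<le> e1" and E2: "max s 0 * (x / n - 1) \<le> e2"
  shows "1/4 \<le> Gamma (x + s) / (Gamma x * n powr s) \<and> Gamma (x + s) / (Gamma x * n powr s) \<le> 6 * exp e1 * exp e2"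
proof -
  have G: "Gamma x * x powr s / 2 \<le> Gamma (x + s)" "Gamma (x + s) \<le> 6 * exp (s\<^sup>2 / x) * (Gamma x * x powr s)"
    using Gamma_ratio[OF x s] by auto
  have gx: "Gamma x > 0" using x by simp
  have P: "1/2 \<le> (x / n) powr s" "(x / n) powr s \<le> exp (max s 0 * (x / n - 1))"
    using pw_bounds[of "x / n" s] x n s u4 xn by (auto simp: field_simps)
  have xs: "x powr s = n powr s * (x / n) powr s" using x n by (simp add: powr_divide)
  define Q where "Q = Gamma (x + s) / (Gamma x * n powr s)"
  have nps: "n powr s > 0" using n by simp
  have D: "Gamma x * n powr s > 0" using gx nps by simp
  have gxn: "Gamma x \<noteq> 0" "n powr s \<noteq> 0" using gx nps by auto
  have Qe: "Gamma (x + s) = Q * (Gamma x * n powr s)" using gxn by (simp add: Q_def)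
  have "((x / n) powr s / 2) * (Gamma x * n powr s) \<le> Q * (Gamma x * n powr s)"
    using G(1) unfolding Qe xs by (simp add: mult_ac)
  then have "Q \<ge> (x / n) powr s / 2" using mult_le_cancel_right_pos[OF D] by blast
  then have l: "Q \<ge> 1/4" using P by linarith
  have "Q * (Gamma x * n powr s) \<le> (6 * exp (s\<^sup>2 / x) * (x / n) powr s) * (Gamma x * n powr s)"
    using G(2) unfolding Qe xs by (simp add: mult_ac)
  then have "Q \<le> 6 * exp (s\<^sup>2 / x) * (x / n) powr s" using mult_le_cancel_right_pos[OF D] by blast
  also have "\<dots> \<le> 6 * exp e1 * exp e2"
  proof -
    have "(x / n) powr s \<le> exp e2" using P(2) E2 by (meson exp_le_cancel_iff order_trans)
    then show ?thesis using E1 by (intro mult_mono) auto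
  qed
  finally show ?thesis using l by (simp add: Q_def)
qed

lemma sq_le_self: "(t::real) \<ge> 0 \<Longrightarrow> t\<^sup>2 \<le> n \<Longrightarrow> n \<ge> 1 \<Longrightarrow> t \<le> n"
  by (cases "t \<le> 1") (auto simp: power2_eq_square intro: order_trans[of t "t * t"])

lemma AB_bounds:
  assumes ab: "a \<ge> b" and b: "b \<ge> -1/2" and n: "n \<ge> 1" and nab: "real n \<ge> (a + \<bar>b\<bar>)\<^sup>2"
  shows "1/4 \<le> AA a n \<and> AA a n \<le> 6 * exp 1 * exp 1 \<and> 1/4 \<le> BB a b n \<and> BB a b n \<le> 6 * exp 1 * exp 2"
proof -
  have a: "a \<ge> -1/2" using ab b by simp
  have nr: "real n \<ge> 1" using n by simp
  have t0: "a + \<bar>b\<bar> \<ge> 0" using ab b by auto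
  have tn: "a + \<bar>b\<bar> \<le> real n" using sq_le_self[OF t0 nab nr] .
  have a2: "a\<^sup>2 \<le> real n"
  proof (cases "a \<ge> 0")
    case True
    then have "a\<^sup>2 \<le> (a + \<bar>b\<bar>)\<^sup>2" by (intro power_mono) auto
    then show ?thesis using nab by linarith
  next
    case False
    have "(-a) * (-a) \<le> (1/2) * (1/2)" using a False by (intro mult_mono) auto
    then have "a\<^sup>2 \<le> 1/4" by (simp add: power2_eq_square)
    then show ?thesis using nr by linarith
  qed
  have an: "a \<le> real n" using tn b by auto
  have A: "1/4 \<le> AA a n \<and> AA a n \<le> 6 * exp 1 * exp 1"
  proof -
    have "1/4 \<le> Gamma (real n + 1 + a) / (Gamma (real n + 1) * real n powr a) \<and>
          Gamma (real n + 1 + a) / (Gamma (real n + 1) * real n powr a) \<le> 6 * exp 1 * exp 1"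
    proof (rule ratio_general)
      show "1 \<le> real n + 1" "0 < real n" "-1/2 \<le> a" "real n \<le> real n + 1" using nr a by auto
      show "(real n + 1) / real n \<le> 4" using nr by (simp add: field_simps)
      show "a\<^sup>2 / (real n + 1) \<le> 1" using a2 nr by (simp add: field_simps)
      have "(real n + 1) / real n - 1 = 1 / real n" using nr by (simp add: field_simps)
      moreover have "max a 0 * (1 / real n) \<le> 1" using an nr by (simp add: field_simps max_def)
      ultimately show "max a 0 * ((real n + 1) / real n - 1) \<le> 1" by simp
    qed
    then show ?thesis by (simp add: AA_def add_ac)
  qed
  have B: "1/4 \<le> BB a b n \<and> BB a b n \<le> 6 * exp 1 * exp 2"
  proof -
    have "1/4 \<le> Gamma (real n + b + 1 + a) / (Gamma (real n + b + 1) * real n powr a) \<and>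
          Gamma (real n + b + 1 + a) / (Gamma (real n + b + 1) * real n powr a) \<le> 6 * exp 1 * exp 2"
    proof (rule ratio_general)
      show "1 \<le> real n + b + 1" "0 < real n" "-1/2 \<le> a" "real n \<le> real n + b + 1" using nr a b by auto
      show "(real n + b + 1) / real n \<le> 4" if "a < 0"
      proof -
        have "b + 1 \<le> 1" using that ab by simp
        then show ?thesis using nr by (simp add: field_simps)
      qed
      show "a\<^sup>2 / (real n + b + 1) \<le> 1" using a2 nr b by (simp add: field_simps)
      have "(real n + b + 1) / real n - 1 = (b + 1) / real n" using nr by (simp add: field_simps)
      moreover have "max a 0 * ((b + 1) / real n) \<le> 2"
      proof (cases "a \<ge> 0")
        case True
        have "a * (b + 1) \<le> a * (a + 1)" using True ab by (intro mult_left_mono) auto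
        also have "\<dots> = a\<^sup>2 + a" by (simp add: power2_eq_square algebra_simps)
        also have "\<dots> \<le> 2 * real n" using a2 an by simp
        finally show ?thesis using True nr by (simp add: field_simps max_def)
      qed (simp add: max_def)
      ultimately show "max a 0 * ((real n + b + 1) / real n - 1) \<le> 2" by simp
    qed
    then show ?thesis by (simp add: BB_def add_ac)
  qed
  show ?thesis using A B by simp
qed

lemma main_bounds:
  assumes ab: "a \<ge> b" and b: "b \<ge> -1/2" and n: "n \<ge> 1" and nab: "real n \<ge> (a + \<bar>b\<bar>)\<^sup>2"
  shows "1/64 * (real n powr (a + 1/2) / (2 powr ((a + b) / 2) * Gamma (a + 1))) \<le> jacobi_p a b n 1 \<and>
       jacobi_p a b n 1 \<le> 17496 * (real n powr (a + 1/2) / (2 powr ((a + b) / 2) * Gamma (a + 1))) \<and>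
       1/64 * (real n powr (2 * a + 2) / (2 powr (a + b) * Gamma (a + 1) * Gamma (a + 2))) \<le> jacobi_K a b n 1 \<and>
       jacobi_K a b n 1 \<le> 17496 * (real n powr (2 * a + 2) / (2 powr (a + b) * Gamma (a + 1) * Gamma (a + 2)))"
proof -
  have a1: "a > -1" and b1: "b > -1" and ab1: "a + b \<ge> -1" using ab b by auto
  have nr: "real n \<ge> 1" using n by simp
  have t0: "a + \<bar>b\<bar> \<ge> 0" using ab b by auto
  have tn: "a + \<bar>b\<bar> \<le> real n"
  proof (cases "a + \<bar>b\<bar> \<le> 1")
    case False
    then have "a + \<bar>b\<bar> \<le> (a + \<bar>b\<bar>) * (a + \<bar>b\<bar>)" by (intro mult_le_cancel_left1[THEN iffD2]) auto
    then show ?thesis using nab by (simp add: power2_eq_square)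
  qed (use nr in auto)
  define Ep where "Ep = real n powr (a + 1/2) / (2 powr ((a + b) / 2) * Gamma (a + 1))"
  define EK where "EK = real n powr (2 * a + 2) / (2 powr (a + b) * Gamma (a + 1) * Gamma (a + 2))"
  define F1 where "F1 = (2 * real n + a + b + 1) / (2 * real n)"
  define F2 where "F2 = (real n + b) / (2 * real n)"
  have gpos: "Gamma (real n + a + 1) > 0" "Gamma (real n + b + 1) > 0" "Gamma (real n + 1) > 0"
    "Gamma (a + 1) > 0" "Gamma (a + 2) > 0" "Gamma (real n + a + b + 1) > 0"
    using a1 b1 ab1 nr by auto
  have Ep_pos: "Ep > 0" unfolding Ep_def using gpos nr by simp
  have EK_pos: "EK > 0" unfolding EK_def using gpos nr by simp
  define na where "na = real n powr a"
  have na: "na > 0" using nr by (simp add: na_def)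
  have np: "(real n powr (a + 1/2))\<^sup>2 = na * na * real n"
  proof -
    have "(real n powr (a + 1/2))\<^sup>2 = real n powr (a + 1/2) * real n powr (a + 1/2)"
      by (simp only: power2_eq_square)
    also have "\<dots> = real n powr ((a + 1/2) + (a + 1/2))"
      by (simp only: powr_add[symmetric])
    also have "(a + 1/2) + (a + 1/2) = a + a + 1" by simp
    also have "real n powr (a + a + 1) = real n powr a * real n powr a * real n powr 1"
      by (simp only: powr_add)
    also have "\<dots> = na * na * real n" using nr by (simp add: na_def)
    finally show ?thesis .
  qed
  have np2: "real n powr (2 * a + 2) = na * na * real n * real n"
  proof -
    have "2 * a + 2 = a + a + 1 + 1" by simp
    then have "real n powr (2 * a + 2) = real n powr a * real n powr a * real n powr 1 * real n powr 1"
      by (simp only: powr_add)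
    then show ?thesis using nr by (simp add: na_def)
  qed
  define P2 where "P2 = 2 powr (a + b)"
  have P2: "P2 > 0" by (simp add: P2_def)
  have p2h: "(2 powr ((a + b) / 2))\<^sup>2 = P2"
    by (simp add: power2_eq_square P2_def flip: powr_add)
  have p21: "2 powr (a + b + 1) = P2 * 2" by (simp add: P2_def powr_add)
  have I1: "(jacobi_p a b n 1)\<^sup>2 = AA a n * BB a b n * F1 * Ep\<^sup>2"
  proof -
    have key: "\<And>gna gnab gn gnb ga. gna > 0 \<Longrightarrow> gnab > 0 \<Longrightarrow> gn > 0 \<Longrightarrow> gnb > 0 \<Longrightarrow> ga > 0 \<Longrightarrow>
      gna * (2 * real n + a + b + 1) * gnab / (P2 * 2 * gn * ga\<^sup>2 * gnb)
      = gna / (gn * na) * (gnab / (gnb * na)) * ((2 * real n + a + b + 1) / (2 * real n)) * (na * na * real n / (P2 * ga\<^sup>2))"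
      using na P2 nr by (simp add: divide_simps power2_eq_square)
    have "Ep\<^sup>2 = na * na * real n / (P2 * (Gamma (a + 1))\<^sup>2)"
      unfolding Ep_def by (simp add: power_divide power_mult_distrib np p2h)
    then show ?thesis
      unfolding p_sq_Gamma[OF a1 b1 ab1 n] AA_def BB_def F1_def p21 na_def[symmetric]
      using key gpos by simp
  qed
  have I2: "jacobi_K a b n 1 = AA a n * BB a b n * F2 * EK"
  proof -
    have key: "\<And>gna gnab gn gnb ga ga2. gna > 0 \<Longrightarrow> gnab > 0 \<Longrightarrow> gn > 0 \<Longrightarrow> gnb > 0 \<Longrightarrow> ga > 0 \<Longrightarrow> ga2 > 0 \<Longrightarrow>
      real n * (real n + b) * gnab * gna / (P2 * 2 * ga * ga2 * gn * gnb)
      = gna / (gn * na) * (gnab / (gnb * na)) * ((real n + b) / (2 * real n)) * (na * na * real n * real n / (P2 * ga * ga2))"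
      using na P2 nr by (simp add: divide_simps)
    show ?thesis
      unfolding K_closed[OF a1 b1 ab1 n] Tk_def AA_def BB_def F2_def EK_def p21 np2 na_def[symmetric] P2_def[symmetric]
      using key gpos by simp
  qed
  have AB: "1/4 \<le> AA a n" "AA a n \<le> 6 * exp 1 * exp 1" "1/4 \<le> BB a b n" "BB a b n \<le> 6 * exp 1 * exp 2"
    using AB_bounds[OF ab b n nab] by auto
  have e1: "exp (1::real) \<le> 3" by (rule exp_le)
  have e2: "exp (2::real) \<le> 9"
  proof -
    have "exp (2::real) = exp 1 * exp 1" by (simp flip: exp_add)
    also have "\<dots> \<le> 3 * 3" using e1 by (intro mult_mono) auto
    finally show ?thesis by simp
  qed
  have Au: "AA a n \<le> 54"
  proof -
    have "6 * exp 1 * exp (1::real) \<le> 6 * 3 * 3" using e1 by (intro mult_mono) auto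
    then show ?thesis using AB by simp
  qed
  have Bu: "BB a b n \<le> 162"
  proof -
    have "6 * exp 1 * exp (2::real) \<le> 6 * 3 * 9" using e1 e2 by (intro mult_mono) auto
    then show ?thesis using AB by simp
  qed
  have ABl: "AA a n * BB a b n \<ge> 1/16"
  proof -
    have "(1/4) * (1/4) \<le> AA a n * BB a b n" using AB by (intro mult_mono) auto
    then show ?thesis by simp
  qed
  have ABu: "AA a n * BB a b n \<le> 8748"
  proof -
    have "AA a n * BB a b n \<le> 54 * 162" using AB Au Bu by (intro mult_mono) auto
    then show ?thesis by simp
  qed
  have F1b: "1 \<le> F1" "F1 \<le> 2" using ab b tn nr by (auto simp: F1_def field_simps)
  have F2b: "1/4 \<le> F2" "F2 \<le> 1" using ab b tn nr by (auto simp: F2_def field_simps)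
  define R1 where "R1 = AA a n * BB a b n * F1"
  have R1b: "1/16 \<le> R1" "R1 \<le> 17496"
  proof -
    have "1/16 * 1 \<le> AA a n * BB a b n * F1" using ABl F1b by (intro mult_mono) auto
    then show "1/16 \<le> R1" by (simp add: R1_def)
    have "AA a n * BB a b n * F1 \<le> 8748 * 2" using ABu F1b ABl by (intro mult_mono) auto
    then show "R1 \<le> 17496" by (simp add: R1_def)
  qed
  define R2 where "R2 = AA a n * BB a b n * F2"
  have R2b: "1/64 \<le> R2" "R2 \<le> 8748"
  proof -
    have "1/16 * (1/4) \<le> AA a n * BB a b n * F2" using ABl F2b by (intro mult_mono) auto
    then show "1/64 \<le> R2" by (simp add: R2_def)
    have "AA a n * BB a b n * F2 \<le> 8748 * 1" using ABu F2b ABl by (intro mult_mono) auto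
    then show "R2 \<le> 8748" by (simp add: R2_def)
  qed
  have ppos: "jacobi_p a b n 1 > 0"
  proof -
    have "(real n + a) gchoose n = Gamma (real n + a + 1) / (fact n * Gamma (a + 1))"
      using gchoose_Gamma[of "real n + a" n] a1 by simp
    then have "(real n + a) gchoose n > 0" using gpos by simp
    then show ?thesis using p_at1[OF a1 b1] hval_pos[OF a1 b1 ab1] by simp
  qed
  have pe: "jacobi_p a b n 1 = sqrt R1 * Ep"
  proof -
    have "jacobi_p a b n 1 = sqrt ((jacobi_p a b n 1)\<^sup>2)" using ppos by simp
    also have "\<dots> = sqrt (R1 * Ep\<^sup>2)" by (simp add: I1 R1_def)
    also have "\<dots> = sqrt R1 * Ep" using Ep_pos by (simp add: real_sqrt_mult)
    finally show ?thesis .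
  qed
  have sR: "1/64 \<le> sqrt R1" "sqrt R1 \<le> 17496"
  proof -
    have "sqrt (1/16) \<le> sqrt R1" using R1b by (subst real_sqrt_le_iff) auto
    moreover have "sqrt (1/16::real) = 1/4" by (simp add: real_sqrt_divide)
    ultimately show "1/64 \<le> sqrt R1" by simp
    have "sqrt R1 \<le> sqrt (17496 * 17496)" using R1b by (subst real_sqrt_le_iff) auto
    then show "sqrt R1 \<le> 17496" by simp
  qed
  have "1/64 * Ep \<le> sqrt R1 * Ep" "sqrt R1 * Ep \<le> 17496 * Ep"
    using sR Ep_pos by (auto intro: mult_right_mono)
  moreover have "1/64 * EK \<le> R2 * EK" "R2 * EK \<le> 17496 * EK"
    using R2b EK_pos by (auto intro: mult_right_mono)
  ultimately show ?thesis
    unfolding pe I2 R2_def[symmetric] Ep_def[symmetric] EK_def[symmetric] by simp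
qed

theorem corollary7p1:
  shows "\<exists>c1 c2 :: real. c1 > 0 \<and> c2 > 0 \<and>
    (\<forall>(a::real) (b::real) (n::nat).
       a \<ge> b \<and> b \<ge> -1/2 \<and> n \<ge> 1 \<and> real n \<ge> (a + \<bar>b\<bar>)\<^sup>2 \<longrightarrow>
       c1 * (real n powr (a + 1/2) / (2 powr ((a + b) / 2) * Gamma (a + 1)))
         \<le> jacobi_p a b n 1 \<and>
       jacobi_p a b n 1
         \<le> c2 * (real n powr (a + 1/2) / (2 powr ((a + b) / 2) * Gamma (a + 1))) \<and>
       c1 * (real n powr (2 * a + 2) / (2 powr (a + b) * Gamma (a + 1) * Gamma (a + 2)))
         \<le> jacobi_K a b n 1 \<and>
       jacobi_K a b n 1
         \<le> c2 * (real n powr (2 * a + 2) / (2 powr (a + b) * Gamma (a + 1) * Gamma (a + 2))))"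
  by (rule exI[of _ "1/64"], rule exI[of _ 17496]) (use main_bounds in auto)

end
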